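(* Let $x_{k+1}=A_kx_k+b_ku_k$, $y_k=c_kx_k$ ($k\in\mathbb{Z}$) be a completely controllable discrete-time system with $A_k\in\mathbb{R}^{n\times n}$, $b_k\in\mathbb{R}^{n\times1}$, $c_k\in\mathbb{R}^{1\times n}$. For $k\in\mathbb{Z}$ let $W_k=[\,b_k,\ A_kb_{k-1},\ A_kA_{k-1}b_{k-2},\ \dots,\ A_k\cdots A_{k-n+2}b_{k-n+1}\,]$ and define scalars by $(\alpha_{k,1},\alpha_{k-1,2},\dots,\alpha_{k-n+1,n})^T=W_k^{-1}A_kW_{k-1}(0,\dots,0,1)^T$. Then the system is algebraically equivalent to a system $(\tilde A_k,\tilde b_k,\tilde c_k)_{k\in\mathbb{Z}}$ where $\tilde b_k=(0,\dots,0,1)^T$ and $\tilde A_k$ is the matrix with ones on the superdiagonal (entries $(i,i+1)$, $1\le i\le n-1$), zeros elsewhere in the first $n-1$ rows, and last row $(\alpha_{k,1},\alpha_{k,2},\dots,\alpha_{k,n})$.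
   Context: Complete controllability: for every $k\in\mathbb{Z}$ and every $\xi_s,\xi_f\in\mathbb{R}^n$ there are controls $u_k,\dots,u_{k+n-1}$ with $x_k=\xi_s\Rightarrow x_{k+n}=\xi_f$ (for such systems every $W_k$ is invertible). Two systems $(A_k,b_k,c_k)$ and $(\tilde A_k,\tilde b_k,\tilde c_k)$ are algebraically equivalent if there are invertible $T_k$ ($k\in\mathbb{Z}$) with $\tilde A_k=T_{k+1}A_kT_k^{-1}$, $\tilde b_k=T_{k+1}b_k$, $\tilde c_k=c_kT_k^{-1}$. *)

theory Defs
  imports "Jordan_Normal_Form.Matrix"
begin

text \<open>Matrices/vectors are Jordan_Normal_Form matrices
  (indices 0..n-1); the row vector c k is represented by the vector of its entries.\<close>

definition well_dim :: "nat \<Rightarrow> (int \<Rightarrow> real mat) \<Rightarrow> (int \<Rightarrow> real vec) \<Rightarrow> (int \<Rightarrow> real vec) \<Rightarrow> bool" where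
  "well_dim n A b c \<longleftrightarrow> (\<forall>k. A k \<in> carrier_mat n n \<and> b k \<in> carrier_vec n \<and> c k \<in> carrier_vec n)"

fun traj :: "(int \<Rightarrow> real mat) \<Rightarrow> (int \<Rightarrow> real vec) \<Rightarrow> (int \<Rightarrow> real) \<Rightarrow> int \<Rightarrow> real vec \<Rightarrow> nat \<Rightarrow> real vec" where
  "traj A b u k xi 0 = xi"
| "traj A b u k xi (Suc j) = A (k + int j) *\<^sub>v traj A b u k xi j + u (k + int j) \<cdot>\<^sub>v b (k + int j)"

definition completely_controllable :: "nat \<Rightarrow> (int \<Rightarrow> real mat) \<Rightarrow> (int \<Rightarrow> real vec) \<Rightarrow> bool" where
  "completely_controllable n A b \<longleftrightarrow>
     (\<forall>k. \<forall>xs \<in> carrier_vec n. \<forall>xf \<in> carrier_vec n. \<exists>u. traj A b u k xs n = xf)"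

definition matinv :: "nat \<Rightarrow> real mat \<Rightarrow> real mat" where
  "matinv n M = (SOME N. N \<in> carrier_mat n n \<and> M * N = 1\<^sub>m n \<and> N * M = 1\<^sub>m n)"

definition alg_equiv :: "nat \<Rightarrow> (int \<Rightarrow> real mat) \<Rightarrow> (int \<Rightarrow> real vec) \<Rightarrow> (int \<Rightarrow> real vec)
    \<Rightarrow> (int \<Rightarrow> real mat) \<Rightarrow> (int \<Rightarrow> real vec) \<Rightarrow> (int \<Rightarrow> real vec) \<Rightarrow> bool" where
  "alg_equiv n A b c At bt ct \<longleftrightarrow>
     (\<exists>T :: int \<Rightarrow> real mat. \<forall>k. T k \<in> carrier_mat n n \<and> invertible_mat (T k)
        \<and> At k = T (k + 1) * A k * matinv n (T k)
        \<and> bt k = T (k + 1) *\<^sub>v b k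
        \<and> ct k = transpose_mat (matinv n (T k)) *\<^sub>v c k)"

text \<open>prodA A n k j = A k * A (k-1) * ... * A (k-j+1)  (identity for j = 0).\<close>
fun prodA :: "(int \<Rightarrow> real mat) \<Rightarrow> nat \<Rightarrow> int \<Rightarrow> nat \<Rightarrow> real mat" where
  "prodA A n k 0 = 1\<^sub>m n"
| "prodA A n k (Suc j) = prodA A n k j * A (k - int j)"

text \<open>W k = [b k, A k b (k-1), ..., A k ... A (k-n+2) b (k-n+1)]; column j (0-based).\<close>
definition Wmat :: "nat \<Rightarrow> (int \<Rightarrow> real mat) \<Rightarrow> (int \<Rightarrow> real vec) \<Rightarrow> int \<Rightarrow> real mat" where
  "Wmat n A b k = mat n n (\<lambda>(i, j). (prodA A n k j *\<^sub>v b (k - int j)) $ i)"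

text \<open>alpha_vec k = W_k^{-1} A_k W_{k-1} e_n = (alpha(k,1), alpha(k-1,2), ..., alpha(k-n+1,n)).
  Hence alpha(m, i) (1-based i) is entry i-1 of alpha_vec (m + i - 1).\<close>
definition alpha_vec :: "nat \<Rightarrow> (int \<Rightarrow> real mat) \<Rightarrow> (int \<Rightarrow> real vec) \<Rightarrow> int \<Rightarrow> real vec" where
  "alpha_vec n A b k = matinv n (Wmat n A b k) * A k * Wmat n A b (k - 1) *\<^sub>v unit_vec n (n - 1)"

definition alpha :: "nat \<Rightarrow> (int \<Rightarrow> real mat) \<Rightarrow> (int \<Rightarrow> real vec) \<Rightarrow> int \<Rightarrow> nat \<Rightarrow> real" where
  "alpha n A b m i = alpha_vec n A b (m + int i - 1) $ (i - 1)"

end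

theory Submission
  imports Defs "Jordan_Normal_Form.Determinant"
begin

lemma mv_entry:
  fixes M :: "real mat"
  assumes "M \<in> carrier_mat n m" "v \<in> carrier_vec m" "i < n"
  shows "(M *\<^sub>v v) $ i = (\<Sum>j<m. M $$ (i, j) * v $ j)"
  using assms by (simp add: scalar_prod_def lessThan_atLeast0 mult.commute)

lemma mat_entry_unit:
  fixes M :: "real mat"
  assumes "M \<in> carrier_mat n m" "i < n" "j < m"
  shows "M $$ (i, j) = (M *\<^sub>v unit_vec m j) $ i"
proof -
  have "(M *\<^sub>v unit_vec m j) $ i = (\<Sum>l<m. M $$ (i, l) * unit_vec m j $ l)"
    using assms by (intro mv_entry) auto
  also have "\<dots> = (\<Sum>l<m. if l = j then M $$ (i, l) else 0)"
    using assms by (intro sum.cong) auto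
  also have "\<dots> = M $$ (i, j)" using assms by (simp add: sum.delta)
  finally show ?thesis by simp
qed

lemma right_inv_invertible:
  fixes M :: "real mat"
  assumes M: "M \<in> carrier_mat n n" and N: "N \<in> carrier_mat n n" and MN: "M * N = 1\<^sub>m n"
  shows "invertible_mat M"
proof -
  have "N * M = 1\<^sub>m n" by (rule mat_mult_left_right_inverse[OF M N MN])
  then show ?thesis using M N MN unfolding invertible_mat_def inverts_mat_def square_mat.simps
    by (intro conjI exI[of _ N]) auto
qed

lemma matinv_props:
  fixes M :: "real mat"
  assumes M: "M \<in> carrier_mat n n" and inv: "invertible_mat M"
  shows "matinv n M \<in> carrier_mat n n" "M * matinv n M = 1\<^sub>m n" "matinv n M * M = 1\<^sub>m n"
proof -
  from inv obtain B where B1: "M * B = 1\<^sub>m (dim_row M)" and B2: "B * M = 1\<^sub>m (dim_row B)"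
    unfolding invertible_mat_def inverts_mat_def by auto
  have "dim_col B = n" using arg_cong[OF B1, of dim_col] M by simp
  moreover have "dim_row B = n" using arg_cong[OF B2, of dim_col] M by simp
  ultimately have "B \<in> carrier_mat n n \<and> M * B = 1\<^sub>m n \<and> B * M = 1\<^sub>m n"
    using B1 B2 M by auto
  then have "matinv n M \<in> carrier_mat n n \<and> M * matinv n M = 1\<^sub>m n \<and> matinv n M * M = 1\<^sub>m n"
    unfolding matinv_def by (rule someI)
  then show "matinv n M \<in> carrier_mat n n" "M * matinv n M = 1\<^sub>m n" "matinv n M * M = 1\<^sub>m n"
    by auto
qed

lemma surj_invertible:
  fixes M :: "real mat"
  assumes M: "M \<in> carrier_mat n n"
    and S: "\<And>y. y \<in> carrier_vec n \<Longrightarrow> \<exists>x \<in> carrier_vec n. M *\<^sub>v x = y"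
  shows "invertible_mat M"
proof -
  define v where "v i = (SOME x. x \<in> carrier_vec n \<and> M *\<^sub>v x = unit_vec n i)" for i
  have v: "v i \<in> carrier_vec n \<and> M *\<^sub>v v i = unit_vec n i" for i
  proof -
    have "\<exists>x. x \<in> carrier_vec n \<and> M *\<^sub>v x = unit_vec n i"
      using S[of "unit_vec n i"] unit_vec_carrier by blast
    then show ?thesis unfolding v_def by (rule someI_ex)
  qed
  define N where "N = mat n n (\<lambda>(r, i). v i $ r)"
  have N: "N \<in> carrier_mat n n" unfolding N_def by simp
  have colN: "col N j = v j" if "j < n" for j
  proof (rule eq_vecI)
    show "dim_vec (col N j) = dim_vec (v j)" using v[of j] N by auto
    fix i assume "i < dim_vec (v j)"
    then have "i < n" using v[of j] carrier_vecD by metis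
    then show "col N j $ i = v j $ i" unfolding N_def using that by simp
  qed
  have "M * N = 1\<^sub>m n"
  proof (rule eq_matI)
    fix i j assume ij: "i < dim_row (1\<^sub>m n)" "j < dim_col (1\<^sub>m n)"
    then have i: "i < n" and j: "j < n" by simp_all
    have "(M * N) $$ (i, j) = row M i \<bullet> col N j" using i j M N by simp
    also have "\<dots> = (M *\<^sub>v v j) $ i" using i j M colN[OF j] by simp
    also have "\<dots> = 1\<^sub>m n $$ (i, j)" using v[of j] i j by simp
    finally show "(M * N) $$ (i, j) = 1\<^sub>m n $$ (i, j)" .
  next
    show "dim_row (M * N) = dim_row (1\<^sub>m n)" using M by simp
    show "dim_col (M * N) = dim_col (1\<^sub>m n)" using N by simp
  qed
  then show ?thesis by (rule right_inv_invertible[OF M N])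
qed


lemma mm_entry:
  fixes X :: "real mat"
  assumes "X \<in> carrier_mat n m" "Y \<in> carrier_mat m p" "i < n" "j < p"
  shows "(X * Y) $$ (i, j) = (\<Sum>r<m. X $$ (i, r) * Y $$ (r, j))"
  using assms by (simp add: scalar_prod_def lessThan_atLeast0)

lemma invertible_from_kernel:
  fixes M :: "real mat"
  assumes M: "M \<in> carrier_mat n n"
    and K: "\<And>v. v \<in> carrier_vec n \<Longrightarrow> M *\<^sub>v v = 0\<^sub>v n \<Longrightarrow> v = 0\<^sub>v n"
  shows "invertible_mat M"
proof -
  have "det M \<noteq> 0"
    using det_0_iff_vec_prod_zero_field[OF M] K by blast
  from det_non_zero_imp_unit[OF M this, of "()"]
  obtain B where B: "B \<in> carrier_mat n n" "M * B = 1\<^sub>m n"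
    unfolding Units_def ring_mat_def by auto
  show ?thesis by (rule right_inv_invertible[OF M B])
qed

context
  fixes n :: nat and A :: "int \<Rightarrow> real mat" and b :: "int \<Rightarrow> real vec"
  assumes n1: "n \<ge> 1" and dimA: "\<And>k. A k \<in> carrier_mat n n"
    and dimb: "\<And>k. b k \<in> carrier_vec n"
    and cc: "completely_controllable n A b"
begin

lemma prodA_carrier[simp]: "prodA A n k j \<in> carrier_mat n n"
  by (induction j) (auto intro: mult_carrier_mat[OF _ dimA])

lemma prodA_Suc': "prodA A n m (Suc l) = A m * prodA A n (m - 1) l"
proof (induction l)
  case 0
  then show ?case using dimA[of m] by simp
next
  case (Suc l)
  have "prodA A n m (Suc (Suc l)) = prodA A n m (Suc l) * A (m - int (Suc l))" by simp
  also have "\<dots> = (A m * prodA A n (m - 1) l) * A (m - int (Suc l))" using Suc by simp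
  also have "\<dots> = A m * (prodA A n (m - 1) l * A (m - 1 - int l))"
    unfolding diff_diff_eq of_nat_Suc by (rule assoc_mult_mat[OF dimA prodA_carrier dimA])
  also have "\<dots> = A m * prodA A n (m - 1) (Suc l)" by simp
  finally show ?case .
qed

definition w where "w m l = prodA A n m l *\<^sub>v b (m - int l)"

lemma w_carrier[simp]: "w m l \<in> carrier_vec n"
  unfolding w_def by (rule mult_mat_vec_carrier[OF prodA_carrier dimb])

lemma w_dim[simp]: "dim_vec (w m l) = n"
  by (simp add: w_def carrier_matD[OF prodA_carrier])

lemma w0: "w m 0 = b m"
  unfolding w_def using dimb[of m] by simp

lemma A_w: "A m *\<^sub>v w (m - 1) l = w m (Suc l)"
proof -
  have "w m (Suc l) = (A m * prodA A n (m - 1) l) *\<^sub>v b (m - 1 - int l)"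
    unfolding w_def prodA_Suc' by (simp add: algebra_simps)
  also have "\<dots> = A m *\<^sub>v (prodA A n (m - 1) l *\<^sub>v b (m - 1 - int l))"
    by (rule assoc_mult_mat_vec[OF dimA prodA_carrier dimb])
  finally show ?thesis unfolding w_def by simp
qed

lemma W_carrier[simp]: "Wmat n A b m \<in> carrier_mat n n"
  unfolding Wmat_def by simp

lemma W_entry: "i < n \<Longrightarrow> l < n \<Longrightarrow> Wmat n A b m $$ (i, l) = w m l $ i"
  unfolding Wmat_def w_def by simp

lemma W_unit:
  assumes l: "l < n"
  shows "Wmat n A b m *\<^sub>v unit_vec n l = w m l"
proof (rule eq_vecI)
  fix i assume "i < dim_vec (w m l)"
  then have i: "i < n" using w_carrier carrier_vecD by metis
  show "(Wmat n A b m *\<^sub>v unit_vec n l) $ i = w m l $ i"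
    using mat_entry_unit[OF W_carrier i l] W_entry[OF i l] by simp
next
  show "dim_vec (Wmat n A b m *\<^sub>v unit_vec n l) = dim_vec (w m l)"
    using carrier_matD[OF W_carrier] by simp
qed

lemma traj_carrier: "traj A b u k (0\<^sub>v n) j \<in> carrier_vec n"
proof (induction j)
  case 0
  show ?case by simp
next
  case (Suc j)
  show ?case
    using add_carrier_vec[OF mult_mat_vec_carrier[OF dimA Suc.IH] smult_carrier_vec[THEN iffD2, OF dimb]]
    by simp
qed

lemma traj_formula:
  "i < n \<Longrightarrow> traj A b u k (0\<^sub>v n) j $ i
     = (\<Sum>l<j. u (k + int j - 1 - int l) * w (k + int j - 1) l $ i)"
proof (induction j arbitrary: i)
  case 0
  then show ?case by simp
next
  case (Suc j)
  let ?m = "k + int j"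
  have "traj A b u k (0\<^sub>v n) (Suc j) $ i
      = (A ?m *\<^sub>v traj A b u k (0\<^sub>v n) j) $ i + u ?m * b ?m $ i"
    using Suc.prems dimA[of ?m] dimb[of ?m] traj_carrier[of u k j] by simp
  also have "(A ?m *\<^sub>v traj A b u k (0\<^sub>v n) j) $ i
      = (\<Sum>r<n. A ?m $$ (i, r) * traj A b u k (0\<^sub>v n) j $ r)"
    by (rule mv_entry[OF dimA traj_carrier Suc.prems])
  also have "\<dots> = (\<Sum>r<n. A ?m $$ (i, r) * (\<Sum>l<j. u (?m - 1 - int l) * w (?m - 1) l $ r))"
    using Suc.IH by (intro sum.cong) auto
  also have "\<dots> = (\<Sum>l<j. u (?m - 1 - int l) * (\<Sum>r<n. A ?m $$ (i, r) * w (?m - 1) l $ r))"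
    unfolding sum_distrib_left by (subst sum.swap) (simp add: mult.left_commute)
  also have "\<dots> = (\<Sum>l<j. u (?m - 1 - int l) * w ?m (Suc l) $ i)"
  proof (intro sum.cong refl)
    fix l
    have "(\<Sum>r<n. A ?m $$ (i, r) * w (?m - 1) l $ r) = (A ?m *\<^sub>v w (?m - 1) l) $ i"
      by (rule mv_entry[OF dimA w_carrier Suc.prems, symmetric])
    then show "u (?m - 1 - int l) * (\<Sum>r<n. A ?m $$ (i, r) * w (?m - 1) l $ r)
        = u (?m - 1 - int l) * w ?m (Suc l) $ i" by (simp add: A_w)
  qed
  finally have "traj A b u k (0\<^sub>v n) (Suc j) $ i
     = u ?m * w ?m 0 $ i + (\<Sum>l<j. u (?m - 1 - int l) * w ?m (Suc l) $ i)"
    by (simp add: w0)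
  also have "\<dots> = (\<Sum>l<Suc j. u (k + int (Suc j) - 1 - int l) * w (k + int (Suc j) - 1) l $ i)"
    by (subst sum.lessThan_Suc_shift) (simp add: diff_diff_eq)
  finally show ?case .
qed

lemma W_surj:
  assumes y: "y \<in> carrier_vec n"
  shows "\<exists>x \<in> carrier_vec n. Wmat n A b m *\<^sub>v x = y"
proof -
  let ?k = "m - int n + 1"
  have "\<exists>u. traj A b u ?k (0\<^sub>v n) n = y"
    using cc y unfolding completely_controllable_def by (meson zero_carrier_vec)
  then obtain u where u: "traj A b u ?k (0\<^sub>v n) n = y" by (rule exE)
  define x where "x = vec n (\<lambda>l. u (m - int l))"
  have x: "x \<in> carrier_vec n" unfolding x_def by (rule vec_carrier)
  have "Wmat n A b m *\<^sub>v x = y"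
  proof (rule eq_vecI)
    fix i assume "i < dim_vec y"
    then have i: "i < n" using y carrier_vecD by metis
    have "(Wmat n A b m *\<^sub>v x) $ i = (\<Sum>l<n. Wmat n A b m $$ (i, l) * x $ l)"
      by (rule mv_entry[OF W_carrier x i])
    also have "\<dots> = (\<Sum>l<n. u (m - int l) * w m l $ i)"
      using i by (intro sum.cong) (auto simp: W_entry x_def)
    also have "\<dots> = traj A b u ?k (0\<^sub>v n) n $ i"
      using traj_formula[OF i, of u ?k n] by simp
    finally show "(Wmat n A b m *\<^sub>v x) $ i = y $ i" using u by simp
  next
    show "dim_vec (Wmat n A b m *\<^sub>v x) = dim_vec y"
      using y carrier_vecD[OF y] carrier_matD[OF W_carrier] by simp
  qed
  then show ?thesis using x by blast
qed

lemma W_inv: "invertible_mat (Wmat n A b m)"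
  by (rule surj_invertible[OF W_carrier W_surj])

definition Wi where "Wi m = matinv n (Wmat n A b m)"

lemma Wi: "Wi m \<in> carrier_mat n n" "Wmat n A b m * Wi m = 1\<^sub>m n" "Wi m * Wmat n A b m = 1\<^sub>m n"
  unfolding Wi_def using matinv_props[OF W_carrier W_inv] by auto

definition Mm where "Mm k = Wi k * A k * Wmat n A b (k - 1)"

lemma Mm_carrier[simp]: "Mm k \<in> carrier_mat n n"
  unfolding Mm_def by (intro mult_carrier_mat[OF mult_carrier_mat[OF Wi(1) dimA] W_carrier])

lemma Mm_mv: "v \<in> carrier_vec n \<Longrightarrow> Mm k *\<^sub>v v = Wi k *\<^sub>v (A k *\<^sub>v (Wmat n A b (k - 1) *\<^sub>v v))"
  unfolding Mm_def
  by (simp add: assoc_mult_mat_vec[OF mult_carrier_mat[OF Wi(1) dimA] W_carrier]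
      assoc_mult_mat_vec[OF Wi(1) dimA] mult_mat_vec_carrier[OF W_carrier])

lemma Wi_W_v: "v \<in> carrier_vec n \<Longrightarrow> Wi k *\<^sub>v (Wmat n A b k *\<^sub>v v) = v"
  using assoc_mult_mat_vec[OF Wi(1) W_carrier, of v k k] Wi(3)[of k] by simp

lemma Mm_unit: "i < n - 1 \<Longrightarrow> Mm k *\<^sub>v unit_vec n i = unit_vec n (Suc i)"
proof -
  assume i: "i < n - 1"
  have "Mm k *\<^sub>v unit_vec n i = Wi k *\<^sub>v (A k *\<^sub>v w (k - 1) i)"
    using i by (simp add: Mm_mv W_unit)
  also have "\<dots> = Wi k *\<^sub>v w k (Suc i)" by (simp add: A_w)
  also have "\<dots> = Wi k *\<^sub>v (Wmat n A b k *\<^sub>v unit_vec n (Suc i))"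
    using i by (simp add: W_unit)
  also have "\<dots> = unit_vec n (Suc i)" by (rule Wi_W_v) simp
  finally show ?thesis .
qed

lemma Mm_last: "Mm k *\<^sub>v unit_vec n (n - 1) = alpha_vec n A b k"
  unfolding Mm_def alpha_vec_def Wi_def by simp

lemma alpha_vec_carrier[simp]: "alpha_vec n A b k \<in> carrier_vec n"
  unfolding Mm_last[symmetric] by (rule mult_mat_vec_carrier[OF Mm_carrier]) simp

lemma Mm_entry:
  assumes i: "i < n" and j: "j < n"
  shows "Mm k $$ (i, j) = (if j < n - 1 then (if i = Suc j then 1 else 0) else alpha_vec n A b k $ i)"
proof (cases "j < n - 1")
  case True
  then show ?thesis using mat_entry_unit[OF Mm_carrier i j] Mm_unit[OF True] i by simp
next
  case False
  then have "j = n - 1" using j by simp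
  then show ?thesis using mat_entry_unit[OF Mm_carrier i j] Mm_last False by simp
qed

lemma Mm_apply:
  assumes v: "v \<in> carrier_vec n" and i: "i < n"
  shows "(Mm k *\<^sub>v v) $ i = (if 1 \<le> i then v $ (i - 1) else 0) + alpha_vec n A b k $ i * v $ (n - 1)"
proof -
  have n: "n = Suc (n - 1)" using n1 by simp
  have "(Mm k *\<^sub>v v) $ i = (\<Sum>j<n. Mm k $$ (i, j) * v $ j)"
    by (rule mv_entry[OF Mm_carrier v i])
  also have "\<dots> = (\<Sum>j<Suc (n - 1). Mm k $$ (i, j) * v $ j)" using n by simp
  also have "\<dots> = (\<Sum>j<n - 1. Mm k $$ (i, j) * v $ j) + Mm k $$ (i, n - 1) * v $ (n - 1)"
    by (rule sum.lessThan_Suc)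
  also have "(\<Sum>j<n - 1. Mm k $$ (i, j) * v $ j) = (\<Sum>j<n - 1. if i = Suc j then v $ j else 0)"
    using i by (intro sum.cong) (auto simp: Mm_entry)
  also have "\<dots> = (if 1 \<le> i then v $ (i - 1) else 0)"
  proof (cases "i = 0")
    case True
    then show ?thesis by simp
  next
    case False
    then have "(\<Sum>j<n - 1. if i = Suc j then v $ j else 0) = (\<Sum>j<n - 1. if j = i - 1 then v $ j else 0)"
      by (intro sum.cong) auto
    also have "\<dots> = v $ (i - 1)" using False i by (simp add: sum.delta)
    finally show ?thesis using False by simp
  qed
  also have "Mm k $$ (i, n - 1) = alpha_vec n A b k $ i"
    using i n1 by (simp add: Mm_entry)
  finally show ?thesis .
qed

fun Mprod :: "int \<Rightarrow> nat \<Rightarrow> real mat" where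
  "Mprod k 0 = 1\<^sub>m n"
| "Mprod k (Suc t) = Mm (k + int t) * Mprod k t"

lemma Mprod_carrier[simp]: "Mprod k t \<in> carrier_mat n n"
  by (induction t) (auto intro: mult_carrier_mat[OF Mm_carrier])

lemma Mprod_shift: "Mprod (k + 1) i * Mm k = Mprod k (Suc i)"
proof (induction i)
  case 0
  then show ?case by (simp add: left_mult_one_mat[OF Mm_carrier] right_mult_one_mat[OF Mm_carrier])
next
  case (Suc i)
  have "Mprod (k + 1) (Suc i) * Mm k = (Mm (k + 1 + int i) * Mprod (k + 1) i) * Mm k" by simp
  also have "\<dots> = Mm (k + 1 + int i) * (Mprod (k + 1) i * Mm k)"
    by (rule assoc_mult_mat[OF Mm_carrier Mprod_carrier Mm_carrier])
  also have "\<dots> = Mprod k (Suc (Suc i))" using Suc by (simp add: add.assoc)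
  finally show ?case .
qed

lemma Mprod_mv: "v \<in> carrier_vec n \<Longrightarrow> Mprod k (Suc t) *\<^sub>v v = Mm (k + int t) *\<^sub>v (Mprod k t *\<^sub>v v)"
  by (simp add: assoc_mult_mat_vec[OF Mm_carrier Mprod_carrier])

lemma Mprod_unit: "l + t \<le> n - 1 \<Longrightarrow> Mprod k t *\<^sub>v unit_vec n l = unit_vec n (l + t)"
proof (induction t)
  case 0
  then show ?case by simp
next
  case (Suc t)
  then have lt: "l + t \<le> n - 1" by simp
  have "Mprod k (Suc t) *\<^sub>v unit_vec n l = Mm (k + int t) *\<^sub>v (Mprod k t *\<^sub>v unit_vec n l)"
    by (rule Mprod_mv) simp
  also have "\<dots> = Mm (k + int t) *\<^sub>v unit_vec n (l + t)" using Suc.IH[OF lt] by simp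
  also have "\<dots> = unit_vec n (l + Suc t)" using Suc.prems by (simp add: Mm_unit)
  finally show ?case .
qed

lemma Mprod_L:
  assumes c: "c \<in> carrier_vec n"
  shows "i < n \<Longrightarrow> (Mprod p l *\<^sub>v c) $ i = (if l \<le> i then c $ (i - l) else 0)
     + (\<Sum>t \<in> {t. t < l \<and> l \<le> t + i + 1}. alpha_vec n A b (p + int t) $ (t + i + 1 - l) * (Mprod p t *\<^sub>v c) $ (n - 1))"
proof (induction l arbitrary: i)
  case 0
  then show ?case using c by simp
next
  case (Suc l)
  let ?g = "\<lambda>t. (Mprod p t *\<^sub>v c) $ (n - 1)"
  have "(Mprod p (Suc l) *\<^sub>v c) $ i = (Mm (p + int l) *\<^sub>v (Mprod p l *\<^sub>v c)) $ i"
    by (simp only: Mprod_mv[OF c])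
  also have "\<dots> = (if 1 \<le> i then (Mprod p l *\<^sub>v c) $ (i - 1) else 0) + alpha_vec n A b (p + int l) $ i * ?g l"
    by (rule Mm_apply[OF mult_mat_vec_carrier[OF Mprod_carrier c] Suc.prems])
  finally have eq: "(Mprod p (Suc l) *\<^sub>v c) $ i = (if 1 \<le> i then (Mprod p l *\<^sub>v c) $ (i - 1) else 0) + alpha_vec n A b (p + int l) $ i * ?g l" .
  show ?case
  proof (cases "i = 0")
    case True
    have "{t. t < Suc l \<and> Suc l \<le> t + i + 1} = {l}" using True by auto
    then show ?thesis using eq True by simp
  next
    case False
    have IH: "(Mprod p l *\<^sub>v c) $ (i - 1) = (if l \<le> i - 1 then c $ (i - 1 - l) else 0)
     + (\<Sum>t \<in> {t. t < l \<and> l \<le> t + (i - 1) + 1}. alpha_vec n A b (p + int t) $ (t + (i - 1) + 1 - l) * ?g t)"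
      using Suc.IH[of "i - 1"] Suc.prems by simp
    have S: "{t. t < Suc l \<and> Suc l \<le> t + i + 1} = insert l {t. t < l \<and> l \<le> t + (i - 1) + 1}"
      using False by auto
    have fin: "finite {t. t < l \<and> l \<le> t + (i - 1) + 1}" by simp
    have "(\<Sum>t \<in> {t. t < Suc l \<and> Suc l \<le> t + i + 1}. alpha_vec n A b (p + int t) $ (t + i + 1 - Suc l) * ?g t)
       = alpha_vec n A b (p + int l) $ i * ?g l
         + (\<Sum>t \<in> {t. t < l \<and> l \<le> t + (i - 1) + 1}. alpha_vec n A b (p + int t) $ (t + i + 1 - Suc l) * ?g t)"
      unfolding S using fin by (subst sum.insert) auto
    also have "(\<Sum>t \<in> {t. t < l \<and> l \<le> t + (i - 1) + 1}. alpha_vec n A b (p + int t) $ (t + i + 1 - Suc l) * ?g t)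
       = (\<Sum>t \<in> {t. t < l \<and> l \<le> t + (i - 1) + 1}. alpha_vec n A b (p + int t) $ (t + (i - 1) + 1 - l) * ?g t)"
      using False by (intro sum.cong) auto
    finally show ?thesis using eq IH False by auto
  qed
qed

definition R where "R k = mat n n (\<lambda>(i, j). Mprod k i $$ (n - 1, j))"
definition Cmp where "Cmp k = mat n n (\<lambda>(i, j). if i + 1 < n then (if j = i + 1 then 1 else 0)
                                  else alpha n A b k (j + 1))"
definition T where "T k = R k * Wi (k - 1)"

lemma R_carrier[simp]: "R k \<in> carrier_mat n n" unfolding R_def by simp
lemma C_carrier[simp]: "Cmp k \<in> carrier_mat n n" unfolding Cmp_def by simp
lemma T_carrier[simp]: "T k \<in> carrier_mat n n" unfolding T_def by (rule mult_carrier_mat[OF R_carrier Wi(1)])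

lemma R_entry: "i < n \<Longrightarrow> j < n \<Longrightarrow> R k $$ (i, j) = (Mprod k i *\<^sub>v unit_vec n j) $ (n - 1)"
  unfolding R_def using n1 by (simp add: mat_entry_unit[OF Mprod_carrier])

lemma R_entry_low:
  assumes i: "i < n" and j: "j < n" and ij: "i + j \<le> n - 1"
  shows "R k $$ (i, j) = (if i + j = n - 1 then 1 else 0)"
  using R_entry[OF i j] Mprod_unit[of j i k] ij n1 by (simp add: add.commute)

lemma R_inv: "invertible_mat (R k)"
proof (rule invertible_from_kernel[OF R_carrier])
  fix v :: "real vec" assume v: "v \<in> carrier_vec n" and Rv: "R k *\<^sub>v v = 0\<^sub>v n"
  have "v $ j = 0" if "j < n" for j
    using that
  proof (induction "n - j" arbitrary: j rule: less_induct)
    case less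
    let ?i = "n - 1 - j"
    have i: "?i < n" using less.prems by simp
    have "0 = (R k *\<^sub>v v) $ ?i" using Rv i by simp
    also have "\<dots> = (\<Sum>j'<n. R k $$ (?i, j') * v $ j')" by (rule mv_entry[OF R_carrier v i])
    also have "\<dots> = (\<Sum>j'<n. if j' = j then v $ j' else 0)"
    proof (intro sum.cong refl)
      fix j' assume j': "j' \<in> {..<n}"
      show "R k $$ (?i, j') * v $ j' = (if j' = j then v $ j' else 0)"
      proof (cases "j' \<le> j")
        case True
        then show ?thesis using R_entry_low[of ?i j' k] i j' less.prems by auto
      next
        case False
        then have "v $ j' = 0" using less.hyps[of j'] j' by auto
        then show ?thesis using False by simp
      qed
    qed
    also have "\<dots> = v $ j" using less.prems by (simp add: sum.delta)
    finally show ?case by simp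
  qed
  then show "v = 0\<^sub>v n" using v by (intro eq_vecI) auto
qed

lemma b_eq: "b k = Wmat n A b k *\<^sub>v unit_vec n 0"
  using W_unit[of 0 k] n1 w0 by simp

lemma T_b: "T (k + 1) *\<^sub>v b k = unit_vec n (n - 1)"
proof -
  have "T (k + 1) *\<^sub>v b k = R (k + 1) *\<^sub>v (Wi k *\<^sub>v b k)"
    unfolding T_def by (simp add: assoc_mult_mat_vec[OF R_carrier Wi(1) dimb])
  also have "Wi k *\<^sub>v b k = unit_vec n 0"
    by (subst b_eq) (rule Wi_W_v, simp)
  also have "R (k + 1) *\<^sub>v unit_vec n 0 = unit_vec n (n - 1)"
  proof (rule eq_vecI)
    fix i assume "i < dim_vec (unit_vec n (n - 1))"
    then have i: "i < n" by simp
    have "(R (k + 1) *\<^sub>v unit_vec n 0) $ i = R (k + 1) $$ (i, 0)"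
      using mat_entry_unit[OF R_carrier i, of 0] n1 by simp
    also have "\<dots> = (Mprod (k + 1) i *\<^sub>v unit_vec n 0) $ (n - 1)"
      using R_entry[OF i, of 0] n1 by simp
    also have "\<dots> = unit_vec n i $ (n - 1)" using Mprod_unit[of 0 i "k + 1"] i by simp
    finally show "(R (k + 1) *\<^sub>v unit_vec n 0) $ i = unit_vec n (n - 1) $ i"
      using i n1 by auto
  qed (simp add: carrier_matD[OF R_carrier])
  finally show ?thesis .
qed

lemma RM_CR: "R (k + 1) * Mm k = Cmp k * R k"
proof (rule eq_matI)
  fix i j assume "i < dim_row (Cmp k * R k)" "j < dim_col (Cmp k * R k)"
  then have i: "i < n" and j: "j < n" by (simp_all add: carrier_matD[OF C_carrier] carrier_matD[OF R_carrier])
  have nn: "n - 1 < n" using n1 by simp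
  have "(R (k + 1) * Mm k) $$ (i, j) = (\<Sum>r<n. R (k + 1) $$ (i, r) * Mm k $$ (r, j))"
    by (rule mm_entry[OF R_carrier Mm_carrier i j])
  also have "\<dots> = (\<Sum>r<n. Mprod (k + 1) i $$ (n - 1, r) * Mm k $$ (r, j))"
    using i by (intro sum.cong) (simp_all add: R_def)
  also have "\<dots> = (Mprod (k + 1) i * Mm k) $$ (n - 1, j)"
    by (rule mm_entry[OF Mprod_carrier Mm_carrier nn j, symmetric])
  also have "\<dots> = Mprod k (Suc i) $$ (n - 1, j)" by (simp only: Mprod_shift)
  finally have L: "(R (k + 1) * Mm k) $$ (i, j) = Mprod k (Suc i) $$ (n - 1, j)" .
  have Rr: "(Cmp k * R k) $$ (i, j) = (\<Sum>r<n. Cmp k $$ (i, r) * R k $$ (r, j))"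
    by (rule mm_entry[OF C_carrier R_carrier i j])
  show "(R (k + 1) * Mm k) $$ (i, j) = (Cmp k * R k) $$ (i, j)"
  proof (cases "i + 1 < n")
    case True
    have "(\<Sum>r<n. Cmp k $$ (i, r) * R k $$ (r, j)) = (\<Sum>r<n. if r = i + 1 then R k $$ (r, j) else 0)"
      using i True by (intro sum.cong) (auto simp: Cmp_def)
    also have "\<dots> = R k $$ (i + 1, j)" using True by (simp add: sum.delta)
    also have "\<dots> = Mprod k (Suc i) $$ (n - 1, j)" using True j by (simp add: R_def)
    finally show ?thesis using L Rr by simp
  next
    case False
    then have iN: "i = n - 1" using i by simp
    then have SN: "Suc i = n" using n1 by simp
    have "Mprod k n $$ (n - 1, j) = (Mprod k n *\<^sub>v unit_vec n j) $ (n - 1)"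
      by (rule mat_entry_unit[OF Mprod_carrier nn j])
    also have "\<dots> = (if n \<le> n - 1 then unit_vec n j $ (n - 1 - n) else 0)
     + (\<Sum>t \<in> {t. t < n \<and> n \<le> t + (n - 1) + 1}. alpha_vec n A b (k + int t) $ (t + (n - 1) + 1 - n)
          * (Mprod k t *\<^sub>v unit_vec n j) $ (n - 1))"
      by (rule Mprod_L[OF unit_vec_carrier nn])
    also have "\<dots> = (\<Sum>t<n. alpha_vec n A b (k + int t) $ t * Mprod k t $$ (n - 1, j))"
    proof -
      have S: "{t. t < n \<and> n \<le> t + (n - 1) + 1} = {..<n}" using n1 by auto
      have Z: "(if n \<le> n - 1 then unit_vec n j $ (n - 1 - n) else 0) = (0::real)" using n1 by simp
      have E: "\<And>t. Mprod k t $$ (n - 1, j) = (Mprod k t *\<^sub>v unit_vec n j) $ (n - 1)"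
        by (rule mat_entry_unit[OF Mprod_carrier nn j])
      show ?thesis unfolding S Z E add_0_left using n1 by (intro sum.cong refl) simp
    qed
    also have "\<dots> = (\<Sum>r<n. Cmp k $$ (i, r) * R k $$ (r, j))"
      using iN j by (intro sum.cong) (auto simp: Cmp_def R_def alpha_def)
    finally show ?thesis using L Rr SN by simp
  qed
next
  show "dim_row (R (k + 1) * Mm k) = dim_row (Cmp k * R k)"
    by (simp add: carrier_matD[OF C_carrier] carrier_matD[OF R_carrier])
  show "dim_col (R (k + 1) * Mm k) = dim_col (Cmp k * R k)"
    by (simp add: carrier_matD[OF Mm_carrier] carrier_matD[OF R_carrier])
qed

lemma WiA: "Wi k * A k = Mm k * Wi (k - 1)"
proof -
  have "Mm k * Wi (k - 1) = (Wi k * A k * Wmat n A b (k - 1)) * Wi (k - 1)" by (simp add: Mm_def)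
  also have "\<dots> = (Wi k * A k) * (Wmat n A b (k - 1) * Wi (k - 1))"
    by (rule assoc_mult_mat[OF mult_carrier_mat[OF Wi(1) dimA] W_carrier Wi(1)])
  also have "\<dots> = Wi k * A k"
    using Wi(2)[of "k - 1"] right_mult_one_mat[OF mult_carrier_mat[OF Wi(1) dimA]] by simp
  finally show ?thesis by simp
qed

lemma T_A: "T (k + 1) * A k = Cmp k * T k"
proof -
  have "T (k + 1) * A k = (R (k + 1) * Wi k) * A k" by (simp add: T_def)
  also have "\<dots> = R (k + 1) * (Wi k * A k)" by (rule assoc_mult_mat[OF R_carrier Wi(1) dimA])
  also have "\<dots> = R (k + 1) * (Mm k * Wi (k - 1))" by (simp only: WiA)
  also have "\<dots> = (R (k + 1) * Mm k) * Wi (k - 1)" by (rule assoc_mult_mat[OF R_carrier Mm_carrier Wi(1), symmetric])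
  also have "\<dots> = (Cmp k * R k) * Wi (k - 1)" by (simp only: RM_CR)
  also have "\<dots> = Cmp k * T k" unfolding T_def by (rule assoc_mult_mat[OF C_carrier R_carrier Wi(1)])
  finally show ?thesis .
qed

lemma T_inv: "invertible_mat (T k)"
proof -
  let ?RI = "matinv n (R k)"
  note RI = matinv_props[OF R_carrier R_inv]
  have "T k * (Wmat n A b (k - 1) * ?RI) = R k * (Wi (k - 1) * (Wmat n A b (k - 1) * ?RI))"
    unfolding T_def by (rule assoc_mult_mat[OF R_carrier Wi(1) mult_carrier_mat[OF W_carrier RI(1)]])
  also have "Wi (k - 1) * (Wmat n A b (k - 1) * ?RI) = (Wi (k - 1) * Wmat n A b (k - 1)) * ?RI"
    by (rule assoc_mult_mat[OF Wi(1) W_carrier RI(1), symmetric])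
  also have "\<dots> = ?RI" using Wi(3) left_mult_one_mat[OF RI(1)] by simp
  also have "R k * ?RI = 1\<^sub>m n" by (rule RI(2))
  finally show ?thesis by (rule right_inv_invertible[OF T_carrier mult_carrier_mat[OF W_carrier RI(1)]])
qed

lemma main_equiv:
  "alg_equiv n A b c (\<lambda>k. Cmp k) (\<lambda>k. unit_vec n (n - 1)) (\<lambda>k. transpose_mat (matinv n (T k)) *\<^sub>v c k)"
  unfolding alg_equiv_def
proof (intro exI[of _ T] allI conjI)
  fix k
  show "T k \<in> carrier_mat n n" by simp
  show "invertible_mat (T k)" by (rule T_inv)
  show "unit_vec n (n - 1) = T (k + 1) *\<^sub>v b k" by (simp add: T_b)
  show "transpose_mat (matinv n (T k)) *\<^sub>v c k = transpose_mat (matinv n (T k)) *\<^sub>v c k" ..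
  note TI = matinv_props[OF T_carrier T_inv, of k]
  have "T (k + 1) * A k * matinv n (T k) = Cmp k * T k * matinv n (T k)" by (simp only: T_A)
  also have "\<dots> = Cmp k * (T k * matinv n (T k))" by (rule assoc_mult_mat[OF C_carrier T_carrier TI(1)])
  also have "\<dots> = Cmp k" using TI(2) right_mult_one_mat[OF C_carrier] by simp
  finally show "Cmp k = T (k + 1) * A k * matinv n (T k)" by simp
qed

end

theorem proposition1:
  fixes n :: nat and A :: "int \<Rightarrow> real mat" and b c :: "int \<Rightarrow> real vec"
  assumes "n \<ge> 1"
    and "well_dim n A b c"
    and "completely_controllable n A b"
  shows "\<exists>ct. alg_equiv n A b c
           (\<lambda>k. mat n n (\<lambda>(i, j). if i + 1 < n then (if j = i + 1 then 1 else 0)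
                                  else alpha n A b k (j + 1)))
           (\<lambda>k. unit_vec n (n - 1))
           ct"
proof -
  have dA: "\<And>k. A k \<in> carrier_mat n n" and db: "\<And>k. b k \<in> carrier_vec n"
    using assms(2) unfolding well_dim_def by auto
  have CC: "Cmp n A b = (\<lambda>k. mat n n (\<lambda>(i, j). if i + 1 < n then (if j = i + 1 then 1 else 0)
                                  else alpha n A b k (j + 1)))"
    using Cmp_def[OF assms(1) dA db assms(3)] by (intro ext) simp
  show ?thesis
    using main_equiv[OF assms(1) dA db assms(3), of c] unfolding CC by blast
qed

end
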